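(* Let $\chi,\psi$ be central characters of $U(\mathfrak{gl}_t)$ and suppose $$\chi(u)-\psi(u)=\sum_{i=1}^re^{b_iu}-\sum_{j=1}^se^{(c_j-1)u}$$ for some $b_1,\ldots,b_r,c_1,\ldots,c_s\in\mathbb C$. Then there exist central characters $\chi^{(n)},\psi^{(n)}$ of $U(\mathfrak{gl}_n(\Bbbk))$ with $\chi=\prod_{\mathcal F}\chi^{(n)}$ and $\psi=\prod_{\mathcal F}\psi^{(n)}$ such that for every $n>r+s$ there is a weight $\lambda^{(n)}\in\Bbbk^n$ with $U(\mathfrak{gl}_n(\Bbbk))$ acting on $M_{\lambda^{(n)}}$ by the central character $\chi^{(n)}$ and acting on $M_{\mu^{(n)}}$ by $\psi^{(n)}$, where $\mu^{(n)}=\lambda^{(n)}-e_1-\cdots-e_r+e_{n-s+1}+\cdots+e_n$.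
   Context: $\Bbbk=\overline{\mathbb Q}$; $\mathcal F$ is a fixed nonprincipal ultrafilter on $\mathbb N$ with a fixed field isomorphism $\prod_{\mathcal F}\Bbbk\simeq\mathbb C$, and $t$ is the image of $\prod_{\mathcal F}n$. $e_i$ is the $i$-th standard basis vector of $\Bbbk^n$. For $\mathfrak{gl}_n(\Bbbk)$, $M_\lambda=U(\mathfrak{gl}_n)\otimes_{U(\mathfrak b)}\Bbbk_{\lambda-\rho}$ ($\mathfrak b$ upper triangular Borel, $\rho$ half-sum of positive roots) and $C_k$ ($k\ge1$) is the central element acting on every $M_\lambda$ by $\sum_i\lambda_i^k$. In $U(\mathfrak{gl}_t)$ (universal enveloping algebra of $\mathfrak{gl}_t=V\otimes V^*$ in Deligne's category $\operatorname{Rep}(GL_t)$, realized as an ultraproduct of the $U(\mathfrak{gl}_n(\Bbbk))$), $C_k=\prod_{\mathcal F}C_k$ and $Z(U(\mathfrak{gl}_t))=\mathbb C[C_1,C_2,\ldots]$; a central character is determined by arbitrary values $\psi_k=\psi(C_k)$, and $\psi=\prod_{\mathcal F}\psi^{(n)}$ means $\psi_k=\prod_{\mathcal F}\psi^{(n)}(C_k)$ for all $k$. Generating function: $\psi(u)=\frac{1}{e^u-1}\sum_{k\ge0}\frac{\psi_k}{k!}u^k$, $\psi_0:=1$ (formal factor); so the hypothesis means $\chi_k-\psi_k=\sum_i((b_i+1)^k-b_i^k)+\sum_j((c_j-1)^k-c_j^k)$ for all $k\ge1$. *)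

theory Defs
  imports Complex_Main "HOL-Computational_Algebra.Polynomial"
begin

text \<open>The field \<Bbbk> = algebraic closure of Q is realised as the algebraic numbers inside the complex numbers.\<close>

definition alg_seqs :: "(nat \<Rightarrow> complex) set" where
  "alg_seqs = {x. \<forall>n. algebraic (x n)}"

definition nonprincipal_ultrafilter :: "nat filter \<Rightarrow> bool" where
  "nonprincipal_ultrafilter F \<longleftrightarrow>
     F \<noteq> bot \<and>
     (\<forall>P. eventually P F \<or> eventually (\<lambda>n. \<not> P n) F) \<and>
     (\<forall>m. eventually (\<lambda>n. n \<noteq> m) F)"

text \<open>A field isomorphism from the ultraproduct of copies of \<Bbbk> (along F) onto the complex numbers,
  presented as a map on representing sequences: it identifies exactly the sequences that agree
  F-almost everywhere, is additive and multiplicative, sends 1 to 1 and is onto.\<close>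

definition ultraproduct_iso :: "nat filter \<Rightarrow> ((nat \<Rightarrow> complex) \<Rightarrow> complex) \<Rightarrow> bool" where
  "ultraproduct_iso F \<Phi> \<longleftrightarrow>
     (\<forall>x\<in>alg_seqs. \<forall>y\<in>alg_seqs. \<Phi> x = \<Phi> y \<longleftrightarrow> eventually (\<lambda>n. x n = y n) F) \<and>
     (\<forall>x\<in>alg_seqs. \<forall>y\<in>alg_seqs. \<Phi> (\<lambda>n. x n + y n) = \<Phi> x + \<Phi> y) \<and>
     (\<forall>x\<in>alg_seqs. \<forall>y\<in>alg_seqs. \<Phi> (\<lambda>n. x n * y n) = \<Phi> x * \<Phi> y) \<and>
     \<Phi> (\<lambda>n. 1) = 1 \<and>
     \<Phi> ` alg_seqs = UNIV"

text \<open>The central character by which U(gl_n(\<Bbbk>)) acts on the Verma module M_\<lambda>,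
  recorded by its values on the central elements C_k: C_k acts by \<Sum>_i \<lambda>_i^k.
  Weights in \<Bbbk>^n are functions nat to complex, with coordinates 0,...,n-1 (coordinate i is \<lambda>_{i+1}).\<close>

definition verma_cc :: "nat \<Rightarrow> (nat \<Rightarrow> complex) \<Rightarrow> nat \<Rightarrow> complex" where
  "verma_cc n lam k = (\<Sum>i<n. lam i ^ k)"

definition weight :: "nat \<Rightarrow> (nat \<Rightarrow> complex) \<Rightarrow> bool" where
  "weight n lam \<longleftrightarrow> (\<forall>i<n. algebraic (lam i))"

text \<open>A central character of U(gl_n(\<Bbbk>)), recorded by its values c k on C_k (k \<ge> 1), which
  determine it. By Harish-Chandra (\<Bbbk> algebraically closed) these are exactly the characters
  by which some Verma module M_\<lambda> acts.\<close>

definition cc_gl :: "nat \<Rightarrow> (nat \<Rightarrow> complex) \<Rightarrow> bool" where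
  "cc_gl n c \<longleftrightarrow> (\<exists>lam. weight n lam \<and> (\<forall>k\<ge>1. c k = verma_cc n lam k))"

definition shift_weight :: "nat \<Rightarrow> nat \<Rightarrow> nat \<Rightarrow> (nat \<Rightarrow> complex) \<Rightarrow> nat \<Rightarrow> complex" where
  "shift_weight n r s lam i =
     lam i - (if i < r then 1 else 0) + (if n - s \<le> i then 1 else 0)"

end

theory Submission
  imports Defs "HOL-Algebra.Finite_Extensions"
begin

definition CR :: "complex ring" where
  "CR = \<lparr>carrier = UNIV, monoid.mult = (\<lambda>x y. x * y), one = 1, ring.zero = 0, add = (\<lambda>x y. x + y)\<rparr>"

lemma CR_simps [simp]: "carrier CR = UNIV" "mult CR = (*)" "one CR = 1" "zero CR = 0" "add CR = (+)"
  by (simp_all add: CR_def)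

lemma field_CR: "field CR"
proof -
  have "\<exists>y. x + y = 0" for x :: complex
    using add.right_inverse by blast
  moreover have "x \<noteq> 0 \<Longrightarrow> \<exists>y. x * y = 1" for x :: complex
    by (rule exI[of _ "inverse x"]) auto
  ultimately show ?thesis
    unfolding CR_def using add.right_inverse
    by unfold_locales (auto simp:algebra_simps Units_def)
qed

interpretation CR: domain CR by (rule field.axioms(1)[OF field_CR])

lemma CR_pow [simp]: "x [^]\<^bsub>CR\<^esub> (n::nat) = x ^ n"
  by (induction n) (simp_all add: mult.commute)

lemma CR_uminus [simp]: "\<ominus>\<^bsub>CR\<^esub> x = - x"
  by (rule CR.minus_equality) auto

lemma CR_inv [simp]: "x \<noteq> 0 \<Longrightarrow> inv\<^bsub>CR\<^esub> x = inverse x"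
  by (rule CR.comm_inv_char) auto

lemma subfield_Rats: "subfield \<rat> CR"
proof (rule field.subfieldI'[OF field_CR])
  show "subring \<rat> CR"
    by (rule CR.subringI) auto
  fix k assume "k \<in> \<rat> - {\<zero>\<^bsub>CR\<^esub>}"
  then show "inv\<^bsub>CR\<^esub> k \<in> \<rat>" by auto
qed

lemma CR_eval: "CR.eval l x = poly (Poly (rev l)) x"
proof (induction l)
  case Nil then show ?case by simp
next
  case (Cons a l)
  have "Poly (rev l @ [a]) = Poly (rev l) + Polynomial.monom a (length l)"
    by (simp add: Poly_snoc)
  then show ?case using Cons by (simp add: poly_monom)
qed


abbreviation QA :: "complex \<Rightarrow> bool" where
  "QA x \<equiv> (CR.algebraic over \<rat>) x"

lemma algebraic_imp_QA: assumes "algebraic x" shows "QA x"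
proof -
  obtain p where p: "\<forall>i. Polynomial.coeff p i \<in> \<rat>" "p \<noteq> 0" "poly p x = 0"
    using assms unfolding algebraic_altdef by blast
  define l where "l = rev (coeffs p)"
  have "l \<noteq> []" using p(2) by (simp add: l_def)
  moreover have "hd l \<noteq> 0" using p(2) by (simp add: l_def hd_rev last_coeffs_eq_coeff_degree)
  moreover have "set l \<subseteq> \<rat>" using p(1)
    by (auto simp: l_def coeffs_def)
  ultimately have "l \<in> carrier (\<rat>[X]\<^bsub>CR\<^esub>)"
    by (simp add: univ_poly_carrier[symmetric] polynomial_def)
  moreover have "CR.eval l x = 0" using p(3) by (simp add: CR_eval l_def)
  ultimately show ?thesis using CR.algebraicI \<open>l \<noteq> []\<close> by auto
qed

lemma QA_imp_algebraic: assumes "QA x" shows "algebraic x"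
proof -
  obtain l where l: "l \<in> carrier (\<rat>[X]\<^bsub>CR\<^esub>)" "l \<noteq> []" "CR.eval l x = \<zero>\<^bsub>CR\<^esub>"
    using CR.algebraicE[OF subfieldE(1)[OF subfield_Rats] _ assms] by auto
  have pl: "set l \<subseteq> \<rat>" "hd l \<noteq> 0"
    using l(1,2) by (auto simp: univ_poly_carrier[symmetric] polynomial_def)
  show ?thesis
  proof (rule algebraicI')
    show "Polynomial.coeff (Poly (rev l)) i \<in> \<rat>" for i
      using pl(1) by (auto simp: nth_default_def intro!: subsetD[OF _ nth_mem])
    show "Poly (rev l) \<noteq> 0"
      using l(2) pl(2) by (auto simp: Poly_eq_0 rev_swap)
    show "poly (Poly (rev l)) x = 0" using l(3) by (simp add: CR_eval)
  qed
qed

lemma algebraic_iff_QA: "algebraic x \<longleftrightarrow> QA x"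
  using algebraic_imp_QA QA_imp_algebraic by blast

lemma algebraic_add [intro]: "algebraic (x::complex) \<Longrightarrow> algebraic (y::complex) \<Longrightarrow> algebraic (x + y)"
  and algebraic_mult [intro]: "algebraic (x::complex) \<Longrightarrow> algebraic (y::complex) \<Longrightarrow> algebraic (x * y)"
proof -
  have S: "subring {x \<in> carrier CR. QA x} CR"
    using subfieldE(1)[OF field.subfield_of_algebraics[OF field_CR subfield_Rats]] .
  assume "algebraic x" "algebraic y"
  then have "x \<in> {x \<in> carrier CR. QA x}" "y \<in> {x \<in> carrier CR. QA x}"
    by (auto simp: algebraic_iff_QA)
  from subringE(6)[OF S this] subringE(7)[OF S this]
  show "algebraic (x + y)" "algebraic (x * y)" by (auto simp: algebraic_iff_QA)
qed



definition om :: "nat \<Rightarrow> complex" where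
  "om k = cis (2 * pi / k)"

lemma om_pow: "om k ^ l = cis (real l * (2 * pi / k))"
  by (simp add: om_def DeMoivre)

lemma om_pow_k: "k > 0 \<Longrightarrow> om k ^ k = 1"
  by (simp add: om_pow)

lemma om_pow_ne1: assumes "0 < l" "l < k" shows "om k ^ l \<noteq> 1"
proof
  assume "om k ^ l = 1"
  then have "cos (real l * (2 * pi / k)) = 1" by (simp add: om_pow complex_eq_iff)
  then obtain n :: int where "real l * (2 * pi / k) = n * (2 * pi)"
    by (auto simp: cos_one_2pi_int)
  then have "pi * (real l * 2) = pi * (real_of_int n * 2) * real k" using assms by (simp add: field_simps)
  then have "real l = real_of_int n * real k" by simp
  then have "real l / real k = n" using assms by simp
  moreover have "0 < real l / real k" "real l / real k < 1" using assms by auto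
  ultimately have "0 < n" "n < 1" by simp_all
  then show False by simp
qed

lemma geo_om: assumes "0 < l" "l < k" shows "(\<Sum>j<k. (om k ^ l) ^ j) = 0"
proof -
  have "((om k ^ l) ^ k) = 1" using om_pow_k[of k] assms by (simp flip: power_mult add: mult.commute[of l k] power_mult)
  then show ?thesis using geometric_sum[OF om_pow_ne1[OF assms], of k] by simp
qed

lemma algebraic_om: "k > 0 \<Longrightarrow> algebraic (om k)"
  by (rule algebraic_root[of 1 "Polynomial.monom 1 k"])
     (auto simp: poly_monom om_pow_k degree_monom_eq coeff_monom)

lemma ex_root: "k > 0 \<Longrightarrow> \<exists>w::complex. w ^ k = z"
proof -
  assume k: "k > 0"
  define w where "w = complex_of_real (root k (cmod z)) * cis (Arg z / k)"
  have "w ^ k = complex_of_real (root k (cmod z) ^ k) * cis (Arg z / k) ^ k"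
    by (simp add: w_def power_mult_distrib)
  also have "\<dots> = complex_of_real (cmod z) * cis (Arg z)"
    using k by (simp add: DeMoivre real_root_pow_pos2)
  also have "\<dots> = z" using rcis_cmod_Arg[of z] by (simp add: rcis_def)
  finally show ?thesis by blast
qed

definition rt :: "nat \<Rightarrow> complex \<Rightarrow> complex" where
  "rt k z = (SOME w. w ^ k = z)"

lemma rt_pow: "k > 0 \<Longrightarrow> rt k z ^ k = z"
  unfolding rt_def using ex_root[of k z] by (metis (mono_tags) someI_ex)

lemma algebraic_rt: "k > 0 \<Longrightarrow> algebraic z \<Longrightarrow> algebraic (rt k z)"
  by (rule algebraic_root[of z "Polynomial.monom 1 k"])
     (auto simp: poly_monom rt_pow degree_monom_eq coeff_monom)

lemma algebraic_power [intro]: "algebraic (x::complex) \<Longrightarrow> algebraic (x ^ n)"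
  by (induction n) auto

lemma algebraic_diff [intro]: "algebraic (x::complex) \<Longrightarrow> algebraic y \<Longrightarrow> algebraic (x - y)"
  using algebraic_add[of x "-y"] by simp

lemma algebraic_divide [intro]: "algebraic (x::complex) \<Longrightarrow> algebraic y \<Longrightarrow> algebraic (x / y)"
  using algebraic_mult[of x "inverse y"] by (simp add: divide_inverse algebraic_inverse)

lemma algebraic_sum [intro]: "(\<And>i. i \<in> A \<Longrightarrow> algebraic (f i :: complex)) \<Longrightarrow> algebraic (sum f A)"
  by (induction A rule: infinite_finite_induct) auto

definition blk :: "complex \<Rightarrow> nat \<Rightarrow> nat \<Rightarrow> complex" where
  "blk a k l = (\<Sum>j<k. (a * om k ^ j) ^ l)"

lemma blk_self: "k > 0 \<Longrightarrow> blk a k k = of_nat k * a ^ k"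
proof -
  assume k: "k > 0"
  have "(a * om k ^ j) ^ k = a ^ k" for j
    using om_pow_k[OF k] by (simp add: power_mult_distrib flip: power_mult) (simp add: mult.commute[of j k] power_mult)
  then show ?thesis by (simp add: blk_def)
qed

lemma blk_zero: "0 < l \<Longrightarrow> l < k \<Longrightarrow> blk a k l = 0"
proof -
  assume a: "0 < l" "l < k"
  have "blk a k l = a ^ l * (\<Sum>j<k. (om k ^ l) ^ j)"
    by (simp add: blk_def sum_distrib_left power_mult_distrib flip: power_mult) (simp add: mult.commute power_mult)
  then show ?thesis using geo_om[OF a] by simp
qed

primrec Alist :: "(nat \<Rightarrow> complex) \<Rightarrow> nat \<Rightarrow> complex list" where
  "Alist t 0 = []"
| "Alist t (Suc l) = Alist t l @
     [rt (Suc l) ((t (Suc l) - (\<Sum>k<l. blk (Alist t l ! k) (Suc k) (Suc l))) / of_nat (Suc l))]"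

lemma length_Alist [simp]: "length (Alist t l) = l"
  by (induction l) auto

lemma Alist_prefix: "k < l \<Longrightarrow> l \<le> M \<Longrightarrow> Alist t M ! k = Alist t l ! k"
proof (induction M)
  case 0 then show ?case by simp
next
  case (Suc M)
  show ?case
  proof (cases "l = Suc M")
    case False
    then have "l \<le> M" using Suc by simp
    then show ?thesis using Suc by (simp add: nth_append)
  qed simp
qed

lemma Alist_last: "Alist t (Suc l) ! l =
   rt (Suc l) ((t (Suc l) - (\<Sum>k<l. blk (Alist t l ! k) (Suc k) (Suc l))) / of_nat (Suc l))"
  by (simp add: nth_append)

lemma algebraic_Alist: "(\<And>l. algebraic (t l)) \<Longrightarrow> x \<in> set (Alist t l) \<Longrightarrow> algebraic x"
proof (induction l arbitrary: x)
  case 0 then show ?case by simp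
next
  case (Suc l)
  have "algebraic (Alist t l ! k)" if "k < l" for k
    using Suc that by auto
  then have "algebraic (blk (Alist t l ! k) (Suc k) (Suc l))" if "k < l" for k
    using that unfolding blk_def by (intro algebraic_sum algebraic_power algebraic_mult algebraic_om) auto
  then have "algebraic (rt (Suc l) ((t (Suc l) - (\<Sum>k<l. blk (Alist t l ! k) (Suc k) (Suc l))) / of_nat (Suc l)))"
    using Suc.prems(1) by (intro algebraic_rt algebraic_divide algebraic_diff algebraic_sum) auto
  then show ?case using Suc by auto
qed

definition FL :: "(nat \<Rightarrow> complex) \<Rightarrow> nat \<Rightarrow> complex list" where
  "FL t N = concat (map (\<lambda>k. map (\<lambda>j. (Alist t N ! k) * om (Suc k) ^ j) [0..<Suc k]) [0..<N])"

definition TN :: "nat \<Rightarrow> nat" where "TN N = (\<Sum>k<N. Suc k)"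

lemma length_FL: "length (FL t N) = TN N"
  by (simp add: FL_def TN_def length_concat sum_list_sum_nth atLeast0LessThan)

lemma TN_ge: "N \<le> TN N"
  unfolding TN_def by (induction N) auto

lemma TN_mono: "N \<le> M \<Longrightarrow> TN N \<le> TN M"
  unfolding TN_def by (rule sum_mono2) auto

lemma algebraic_FL: "(\<And>l. algebraic (t l)) \<Longrightarrow> x \<in> set (FL t N) \<Longrightarrow> algebraic x"
  unfolding FL_def using algebraic_Alist[of t _ N] 
  by (auto intro!: algebraic_mult algebraic_power algebraic_om)

lemma sum_list_concat': "sum_list (concat xss) = sum_list (map sum_list xss)"
  by (induction xss) auto

lemma FL_psum_blk: "sum_list (map (\<lambda>z. z ^ l) (FL t N)) = (\<Sum>k<N. blk (Alist t N ! k) (Suc k) l)"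
  by (simp add: FL_def map_concat sum_list_concat' o_def blk_def interv_sum_list_conv_sum_set_nat atLeast0LessThan)

lemma FL_psum: assumes "0 < l" "l \<le> N" shows "sum_list (map (\<lambda>z. z ^ l) (FL t N)) = t l"
proof -
  obtain p where p: "l = Suc p" using assms by (cases l) auto
  have "(\<Sum>k<N. blk (Alist t N ! k) (Suc k) l) = (\<Sum>k<l. blk (Alist t N ! k) (Suc k) l)"
    using assms by (intro sum.mono_neutral_right) (auto intro!: blk_zero)
  also have "\<dots> = (\<Sum>k<p. blk (Alist t p ! k) (Suc k) l) + blk (Alist t N ! p) l l"
    using assms p by (simp add: Alist_prefix[of _ p N t])
  also have "blk (Alist t N ! p) l l = of_nat l * (Alist t l ! p) ^ l"
    using assms p by (simp add: blk_self Alist_prefix[of p l N t])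
  also have "\<dots> = t l - (\<Sum>k<p. blk (Alist t p ! k) (Suc k) l)"
    unfolding p Alist_last rt_pow[OF zero_less_Suc] by (simp del: of_nat_Suc)
  finally show ?thesis by (simp add: FL_psum_blk)
qed

lemma sum_split_add: "(\<Sum>i<(a::nat)+b. g i) = (\<Sum>i<a. g i) + (\<Sum>i<b. g (a + i))"
  by (induction b rule: nat.induct) (simp_all add: add_ac)

lemma sum_split3: assumes "r + s \<le> (n::nat)"
  shows "(\<Sum>i<n. g i) = (\<Sum>i<r. g i) + (\<Sum>i<n-r-s. g (r + i)) + (\<Sum>j<s. g (n - s + j))"
proof -
  have n: "n = r + (n - r - s) + s" using assms by simp
  have "(\<Sum>i<n. g i) = (\<Sum>i<r + (n - r - s) + s. g i)" using n by simp
  also have "\<dots> = (\<Sum>i<r. g i) + (\<Sum>i<n-r-s. g (r + i)) + (\<Sum>j<s. g (r + (n - r - s) + j))"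
    by (simp add: sum_split_add)
  also have "r + (n - r - s) = n - s" using assms by simp
  finally show ?thesis .
qed

lemma sum_mid: assumes "length (L::complex list) \<le> m" "0 < l"
  shows "(\<Sum>i<m. nth_default 0 L i ^ l) = sum_list (map (\<lambda>z. z ^ l) L)"
proof -
  have "(\<Sum>i<m. nth_default 0 L i ^ l) = (\<Sum>i<length L. nth_default 0 L i ^ l)"
    using assms by (intro sum.mono_neutral_right) (auto simp: nth_default_def zero_power)
  also have "\<dots> = (\<Sum>i<length L. L ! i ^ l)" by (simp add: nth_default_def)
  finally show ?thesis by (simp add: sum_list_sum_nth atLeast0LessThan)
qed

lemma sum_list_map_nth: "sum_list (map f xs) = (\<Sum>i<length xs. f (xs ! i))"
  by (simp add: sum_list_sum_nth atLeast0LessThan)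

lemma alg_seqs_iff: "x \<in> alg_seqs \<longleftrightarrow> (\<forall>n. algebraic (x n))"
  by (simp add: alg_seqs_def)

lemma algebraic_add_simp [simp]: "algebraic (x::complex) \<Longrightarrow> algebraic y \<Longrightarrow> algebraic (x + y)"
  and algebraic_mult_simp [simp]: "algebraic (x::complex) \<Longrightarrow> algebraic y \<Longrightarrow> algebraic (x * y)"
  and algebraic_diff_simp [simp]: "algebraic (x::complex) \<Longrightarrow> algebraic y \<Longrightarrow> algebraic (x - y)"
  and algebraic_power_simp [simp]: "algebraic (x::complex) \<Longrightarrow> algebraic (x ^ k)"
  and algebraic_sum_simp [simp]: "(\<And>i. i \<in> A \<Longrightarrow> algebraic (f i :: complex)) \<Longrightarrow> algebraic (sum f A)"
  by auto

context
  fixes F :: "nat filter" and \<Phi> :: "(nat \<Rightarrow> complex) \<Rightarrow> complex"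
  assumes iso: "ultraproduct_iso F \<Phi>"
begin

lemma Phi_add: "x \<in> alg_seqs \<Longrightarrow> y \<in> alg_seqs \<Longrightarrow> \<Phi> (\<lambda>n. x n + y n) = \<Phi> x + \<Phi> y"
  using iso unfolding ultraproduct_iso_def by blast

lemma Phi_mult: "x \<in> alg_seqs \<Longrightarrow> y \<in> alg_seqs \<Longrightarrow> \<Phi> (\<lambda>n. x n * y n) = \<Phi> x * \<Phi> y"
  using iso unfolding ultraproduct_iso_def by blast

lemma Phi_one: "\<Phi> (\<lambda>n. 1) = 1"
  using iso unfolding ultraproduct_iso_def by blast

lemma Phi_eq: "x \<in> alg_seqs \<Longrightarrow> y \<in> alg_seqs \<Longrightarrow> eventually (\<lambda>n. x n = y n) F \<Longrightarrow> \<Phi> x = \<Phi> y"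
  using iso unfolding ultraproduct_iso_def by blast

lemma Phi_zero: "\<Phi> (\<lambda>n. 0) = 0"
proof -
  have "\<Phi> (\<lambda>n. 0 + 0) = \<Phi> (\<lambda>n. 0) + \<Phi> (\<lambda>n. 0)"
    by (rule Phi_add) (auto simp: alg_seqs_iff)
  then show ?thesis by simp
qed

lemma Phi_uminus: "x \<in> alg_seqs \<Longrightarrow> \<Phi> (\<lambda>n. - x n) = - \<Phi> x"
proof -
  assume x: "x \<in> alg_seqs"
  then have "\<Phi> (\<lambda>n. x n + - x n) = \<Phi> x + \<Phi> (\<lambda>n. - x n)"
    by (intro Phi_add) (auto simp: alg_seqs_iff)
  then show ?thesis by (simp add: Phi_zero eq_neg_iff_add_eq_0 add.commute)
qed

lemma Phi_diff: "x \<in> alg_seqs \<Longrightarrow> y \<in> alg_seqs \<Longrightarrow> \<Phi> (\<lambda>n. x n - y n) = \<Phi> x - \<Phi> y"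
proof -
  assume xy: "x \<in> alg_seqs" "y \<in> alg_seqs"
  then have "\<Phi> (\<lambda>n. x n + - y n) = \<Phi> x + \<Phi> (\<lambda>n. - y n)"
    by (intro Phi_add) (auto simp: alg_seqs_iff)
  then show ?thesis using Phi_uminus[OF xy(2)] by simp
qed

lemma Phi_pow: "x \<in> alg_seqs \<Longrightarrow> \<Phi> (\<lambda>n. x n ^ k) = \<Phi> x ^ k"
proof (induction k)
  case 0 then show ?case by (simp add: Phi_one)
next
  case (Suc k)
  have "\<Phi> (\<lambda>n. x n * x n ^ k) = \<Phi> x * \<Phi> (\<lambda>n. x n ^ k)"
    using Suc by (intro Phi_mult) (auto simp: alg_seqs_iff)
  then show ?case using Suc by simp
qed

lemma Phi_sum: "finite I \<Longrightarrow> (\<And>i. i \<in> I \<Longrightarrow> f i \<in> alg_seqs) \<Longrightarrow>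
    \<Phi> (\<lambda>n. \<Sum>i\<in>I. f i n) = (\<Sum>i\<in>I. \<Phi> (f i))"
proof (induction I rule: finite_induct)
  case empty then show ?case by (simp add: Phi_zero)
next
  case (insert a I)
  have "\<Phi> (\<lambda>n. f a n + (\<Sum>i\<in>I. f i n)) = \<Phi> (f a) + \<Phi> (\<lambda>n. \<Sum>i\<in>I. f i n)"
    using insert by (intro Phi_add) (auto simp: alg_seqs_iff)
  then show ?case using insert by simp
qed

end


lemma eventually_ge_nat: assumes "nonprincipal_ultrafilter F" shows "eventually (\<lambda>n. M \<le> n) F"
proof (induction M)
  case 0 then show ?case by simp
next
  case (Suc M)
  have "eventually (\<lambda>n. n \<noteq> M) F" using assms unfolding nonprincipal_ultrafilter_def by blast
  with Suc show ?case by eventually_elim auto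
qed

theorem corollary10:
  fixes F :: "nat filter" and \<Phi> :: "(nat \<Rightarrow> complex) \<Rightarrow> complex"
    and \<chi> \<psi> :: "nat \<Rightarrow> complex" and bs cs :: "complex list"
  assumes "nonprincipal_ultrafilter F"
    and "ultraproduct_iso F \<Phi>"
    and hyp: "\<forall>k\<ge>1. \<chi> k - \<psi> k =
               (\<Sum>b\<leftarrow>bs. (b + 1) ^ k - b ^ k) + (\<Sum>c\<leftarrow>cs. (c - 1) ^ k - c ^ k)"
  shows "\<exists>\<chi>n \<psi>n :: nat \<Rightarrow> nat \<Rightarrow> complex.
           (\<forall>n. cc_gl n (\<chi>n n) \<and> cc_gl n (\<psi>n n)) \<and>
           (\<forall>k\<ge>1. \<chi> k = \<Phi> (\<lambda>n. \<chi>n n k) \<and> \<psi> k = \<Phi> (\<lambda>n. \<psi>n n k)) \<and>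
           (\<forall>n > length bs + length cs. \<exists>lam. weight n lam \<and>
              (\<forall>k\<ge>1. \<chi>n n k = verma_cc n lam k \<and>
                      \<psi>n n k = verma_cc n (shift_weight n (length bs) (length cs) lam) k))"
proof -
  note iso = assms(2)
  have "\<forall>z. \<exists>x. x \<in> alg_seqs \<and> \<Phi> x = z"
    using iso unfolding ultraproduct_iso_def by (metis UNIV_I imageE)
  then obtain rep where rep: "\<And>z. rep z \<in> alg_seqs" "\<And>z. \<Phi> (rep z) = z" by metis
  have alg_rep [simp]: "algebraic (rep z n)" for z n using rep(1) by (simp add: alg_seqs_iff)
  define r where "r = length bs"
  define s where "s = length cs"
  define \<beta> where "\<beta> i = rep (bs ! i + 1)" for i
  define \<gamma> where "\<gamma> j = rep (cs ! j - 1)" for j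
  define Xr where "Xr l = rep (\<chi> l)" for l
  define t where "t n l = Xr l n - (\<Sum>i<r. \<beta> i n ^ l) - (\<Sum>j<s. \<gamma> j n ^ l)" for n l
  define Nn where "Nn n = Max {N. TN N \<le> n - r - s}" for n
  define Fn where "Fn n = FL (t n) (Nn n)" for n
  define lam where "lam n i = (if i < r then \<beta> i n else if i < n - s then nth_default 0 (Fn n) (i - r)
      else \<gamma> (i - (n - s)) n)" for n i
  define \<chi>n where "\<chi>n n k = verma_cc n (lam n) k" for n k
  define \<psi>n where "\<psi>n n k = verma_cc n (shift_weight n r s (lam n)) k" for n k
  have alg_t: "algebraic (t n l)" for n l by (simp add: t_def \<beta>_def \<gamma>_def Xr_def)
  have alg_lam: "algebraic (lam n i)" for n i
  proof -
    have "algebraic (nth_default 0 (Fn n) j)" for j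
      unfolding nth_default_def Fn_def using algebraic_FL[of "t n", OF alg_t] by (auto intro: nth_mem)
    then show ?thesis by (simp add: lam_def \<beta>_def \<gamma>_def)
  qed
  have W: "weight n (lam n)" for n using alg_lam by (simp add: weight_def)
  have WS: "weight n (shift_weight n r s (lam n))" for n
    using alg_lam by (simp add: weight_def shift_weight_def)
  have fin: "finite {N. TN N \<le> m}" for m
    by (rule finite_subset[of _ "{..m}"]) (auto intro: order.trans[OF TN_ge])
  have Nn1: "TN (Nn n) \<le> n - r - s" for n
  proof -
    have "0 \<in> {N. TN N \<le> n - r - s}" by (simp add: TN_def)
    then have "{N. TN N \<le> n - r - s} \<noteq> {}" by blast
    from Max_in[OF fin this] show ?thesis unfolding Nn_def by simp
  qed
  have Nn2: "k \<le> Nn n" if "TN k \<le> n - r - s" for k n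
    unfolding Nn_def using that by (intro Max_ge[OF fin]) auto
  have decomp: "\<chi>n n k = Xr k n \<and> \<psi>n n k = Xr k n + (\<Sum>i<r. (\<beta> i n - 1) ^ k - \<beta> i n ^ k)
                  + (\<Sum>j<s. (\<gamma> j n + 1) ^ k - \<gamma> j n ^ k)"
    if k: "1 \<le> k" and n: "r + s + TN k \<le> n" for k n
  proof -
    have rs: "r + s \<le> n" using n by simp
    have len: "length (Fn n) \<le> n - r - s" using Nn1 by (simp add: Fn_def length_FL)
    have kN: "k \<le> Nn n" using n by (intro Nn2) simp
    have mid: "(\<Sum>i<n-r-s. nth_default 0 (Fn n) i ^ k) = t n k"
      using sum_mid[OF len, of k] k FL_psum[of k "Nn n" "t n"] kN by (simp add: Fn_def)
    have l1: "lam n i = \<beta> i n" if "i < r" for i using that by (simp add: lam_def)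
    have l2: "lam n (r + i) = nth_default 0 (Fn n) i" if "i < n - r - s" for i
      using that by (auto simp: lam_def)
    have l3: "lam n (n - s + j) = \<gamma> j n" if "j < s" for j
    proof -
      have a: "\<not> (n - s + j < r)" "\<not> (n - s + j < n - s)" using that rs by auto
      show ?thesis unfolding lam_def if_not_P[OF a(1)] if_not_P[OF a(2)] by simp
    qed
    have s1: "shift_weight n r s (lam n) i = \<beta> i n - 1" if "i < r" for i
      using that rs by (simp add: shift_weight_def l1)
    have s2: "shift_weight n r s (lam n) (r + i) = nth_default 0 (Fn n) i" if "i < n - r - s" for i
      using that by (simp add: shift_weight_def l2)
    have s3: "shift_weight n r s (lam n) (n - s + j) = \<gamma> j n + 1" if "j < s" for j
    proof -
      have a: "\<not> (n - s + j < r)" "n - s \<le> n - s + j" using that rs by auto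
      show ?thesis unfolding shift_weight_def if_not_P[OF a(1)] if_P[OF a(2)] l3[OF that] by simp
    qed
    have "\<chi>n n k = (\<Sum>i<r. \<beta> i n ^ k) + t n k + (\<Sum>j<s. \<gamma> j n ^ k)"
      unfolding \<chi>n_def verma_cc_def sum_split3[OF rs] mid[symmetric]
      by (simp add: l1 l2 l3)
    also have "\<dots> = Xr k n" by (simp add: t_def)
    finally have A: "\<chi>n n k = Xr k n" .
    have "\<psi>n n k = (\<Sum>i<r. (\<beta> i n - 1) ^ k) + t n k + (\<Sum>j<s. (\<gamma> j n + 1) ^ k)"
      unfolding \<psi>n_def verma_cc_def sum_split3[OF rs] mid[symmetric]
      by (simp add: s1 s2 s3)
    also have "\<dots> = Xr k n + (\<Sum>i<r. (\<beta> i n - 1) ^ k - \<beta> i n ^ k)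
                  + (\<Sum>j<s. (\<gamma> j n + 1) ^ k - \<gamma> j n ^ k)"
      by (simp add: t_def sum_subtractf)
    finally show ?thesis using A by simp
  qed
  have ev: "eventually (\<lambda>n. r + s + TN k \<le> n) F" for k
    by (rule eventually_ge_nat[OF assms(1)])
  have chi_seq: "(\<lambda>n. \<chi>n n k) \<in> alg_seqs" "(\<lambda>n. \<psi>n n k) \<in> alg_seqs" for k
    using W WS by (auto simp: alg_seqs_iff \<chi>n_def \<psi>n_def verma_cc_def weight_def alg_lam)
  have part2: "\<chi> k = \<Phi> (\<lambda>n. \<chi>n n k) \<and> \<psi> k = \<Phi> (\<lambda>n. \<psi>n n k)" if k: "1 \<le> k" for k
  proof
    have "\<Phi> (\<lambda>n. \<chi>n n k) = \<Phi> (Xr k)"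
      using ev[of k] by (intro Phi_eq[OF iso chi_seq(1)]) (auto simp: Xr_def rep elim!: eventually_mono dest: decomp[OF k])
    then show "\<chi> k = \<Phi> (\<lambda>n. \<chi>n n k)" by (simp add: Xr_def rep)
    define E where "E n = Xr k n + (\<Sum>i<r. (\<beta> i n - 1) ^ k - \<beta> i n ^ k)
                  + (\<Sum>j<s. (\<gamma> j n + 1) ^ k - \<gamma> j n ^ k)" for n
    have Ealg: "E \<in> alg_seqs" by (simp add: alg_seqs_iff E_def \<beta>_def \<gamma>_def Xr_def)
    have "\<Phi> (\<lambda>n. \<psi>n n k) = \<Phi> E"
      using ev[of k] by (intro Phi_eq[OF iso chi_seq(2) Ealg]) (auto simp: E_def elim!: eventually_mono dest: decomp[OF k])
    also have "\<Phi> E = \<chi> k + (\<Sum>i<r. (bs ! i) ^ k - (bs ! i + 1) ^ k) + (\<Sum>j<s. (cs ! j) ^ k - (cs ! j - 1) ^ k)"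
    proof -
      have m: "(\<lambda>n. 1) \<in> alg_seqs" "\<And>z. rep z \<in> alg_seqs" by (simp_all add: alg_seqs_iff rep)
      have m2: "(\<lambda>n. (\<beta> i n - 1) ^ k - \<beta> i n ^ k) \<in> alg_seqs" "(\<lambda>n. (\<gamma> i n + 1) ^ k - \<gamma> i n ^ k) \<in> alg_seqs"
        "(\<lambda>n. \<Sum>i<r. (\<beta> i n - 1) ^ k - \<beta> i n ^ k) \<in> alg_seqs"
        "(\<lambda>n. \<Sum>i<s. (\<gamma> i n + 1) ^ k - \<gamma> i n ^ k) \<in> alg_seqs"
        "(\<lambda>n. \<beta> i n - 1) \<in> alg_seqs" "(\<lambda>n. \<gamma> i n + 1) \<in> alg_seqs"
        "(\<lambda>n. (\<beta> i n - 1) ^ k) \<in> alg_seqs" "(\<lambda>n. (\<gamma> i n + 1) ^ k) \<in> alg_seqs"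
        "(\<lambda>n. \<beta> i n ^ k) \<in> alg_seqs" "(\<lambda>n. \<gamma> i n ^ k) \<in> alg_seqs"
        "Xr k \<in> alg_seqs" "(\<lambda>n. Xr k n + (\<Sum>i<r. (\<beta> i n - 1) ^ k - \<beta> i n ^ k)) \<in> alg_seqs" for i
        by (simp_all add: alg_seqs_iff \<beta>_def \<gamma>_def Xr_def)
      have "\<Phi> E = \<Phi> (Xr k) + (\<Sum>i<r. \<Phi> (\<lambda>n. (\<beta> i n - 1) ^ k - \<beta> i n ^ k))
          + (\<Sum>j<s. \<Phi> (\<lambda>n. (\<gamma> j n + 1) ^ k - \<gamma> j n ^ k))"
        unfolding E_def
        by (simp add: Phi_add[OF iso] Phi_sum[OF iso] m2)
      also have "\<dots> = \<chi> k + (\<Sum>i<r. (bs ! i) ^ k - (bs ! i + 1) ^ k) + (\<Sum>j<s. (cs ! j) ^ k - (cs ! j - 1) ^ k)"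
      proof -
        have tb: "\<Phi> (\<lambda>n. (\<beta> i n - 1) ^ k - \<beta> i n ^ k) = (bs ! i) ^ k - (bs ! i + 1) ^ k" for i
        proof -
          have "\<Phi> (\<lambda>n. (\<beta> i n - 1) ^ k - \<beta> i n ^ k) = \<Phi> (\<lambda>n. (\<beta> i n - 1) ^ k) - \<Phi> (\<lambda>n. \<beta> i n ^ k)"
            by (rule Phi_diff[OF iso]) (simp_all add: m2)
          also have "\<Phi> (\<lambda>n. (\<beta> i n - 1) ^ k) = \<Phi> (\<lambda>n. \<beta> i n - 1) ^ k"
            by (rule Phi_pow[OF iso, of "\<lambda>n. \<beta> i n - 1"]) (simp add: m2)
          also have "\<Phi> (\<lambda>n. \<beta> i n - 1) = \<Phi> (\<beta> i) - \<Phi> (\<lambda>n. 1)"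
            by (rule Phi_diff[OF iso, of "\<beta> i" "\<lambda>n. 1"]) (simp_all add: m \<beta>_def)
          also have "\<Phi> (\<lambda>n. \<beta> i n ^ k) = \<Phi> (\<beta> i) ^ k"
            by (rule Phi_pow[OF iso]) (simp add: m \<beta>_def)
          finally show ?thesis by (simp add: Phi_one[OF iso] \<beta>_def rep)
        qed
        have tc: "\<Phi> (\<lambda>n. (\<gamma> i n + 1) ^ k - \<gamma> i n ^ k) = (cs ! i) ^ k - (cs ! i - 1) ^ k" for i
        proof -
          have "\<Phi> (\<lambda>n. (\<gamma> i n + 1) ^ k - \<gamma> i n ^ k) = \<Phi> (\<lambda>n. (\<gamma> i n + 1) ^ k) - \<Phi> (\<lambda>n. \<gamma> i n ^ k)"
            by (rule Phi_diff[OF iso]) (simp_all add: m2)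
          also have "\<Phi> (\<lambda>n. (\<gamma> i n + 1) ^ k) = \<Phi> (\<lambda>n. \<gamma> i n + 1) ^ k"
            by (rule Phi_pow[OF iso, of "\<lambda>n. \<gamma> i n + 1"]) (simp add: m2)
          also have "\<Phi> (\<lambda>n. \<gamma> i n + 1) = \<Phi> (\<gamma> i) + \<Phi> (\<lambda>n. 1)"
            by (rule Phi_add[OF iso, of "\<gamma> i" "\<lambda>n. 1"]) (simp_all add: m \<gamma>_def)
          also have "\<Phi> (\<lambda>n. \<gamma> i n ^ k) = \<Phi> (\<gamma> i) ^ k"
            by (rule Phi_pow[OF iso]) (simp add: m \<gamma>_def)
          finally show ?thesis by (simp add: Phi_one[OF iso] \<gamma>_def rep)
        qed
        show ?thesis by (simp add: tb tc Xr_def rep)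
      qed
      finally show ?thesis .
    qed
    also have "\<dots> = \<psi> k"
      using hyp k unfolding sum_list_map_nth r_def s_def by (simp add: sum_subtractf algebra_simps)
    finally show "\<psi> k = \<Phi> (\<lambda>n. \<psi>n n k)" by simp
  qed
  show ?thesis
    apply (rule exI[of _ \<chi>n], rule exI[of _ \<psi>n])
    using W WS part2
    by (auto simp: cc_gl_def \<chi>n_def \<psi>n_def r_def s_def)
qed

end
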